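(* Let $\underline n=(n_1,\dots,n_d)$ be a tuple of positive integers and suppose the knight graph $\mathcal{G}_{\underline n}$ contains a bi-sited Hamiltonian cycle. Let $k\geq 2$ be an integer and $\underline m=(n_1,\dots,n_d,k)$. Then $\mathcal{G}_{\underline m}$ contains a bi-sited Hamiltonian cycle.
   Context: For a tuple $\underline n=(n_1,\dots,n_d)$ of positive integers, the board is $\mathcal{B}_{\underline n}=\{1,\dots,n_1\}\times\cdots\times\{1,\dots,n_d\}$. Let $\mathcal{C}_d$ be the set of vectors in $\mathbb{Z}^d$ with exactly one coordinate in $\{\pm1\}$, exactly one coordinate in $\{\pm2\}$ and all other coordinates $0$ (knight moves). The knight graph $\mathcal{G}_{\underline n}$ has vertex set $\mathcal{B}_{\underline n}$, with $a,b$ adjacent iff $a-b\in\mathcal{C}_d$. Let $e_1,\dots,e_d$ be the standard basis of $\mathbb{R}^d$. For $c\in\mathcal{C}_d$ let $e_{[c,1]}$ (resp. $e_{[c,2]}$) be the standard basis vector of the coordinate where $c$ has entry $\pm1$ (resp. $\pm2$), and let $\tilde c=-\langle c,e_{[c,1]}\rangle e_{[c,1]}+\langle c,e_{[c,2]}\rangle e_{[c,2]}$ (i.e. $c$ with the sign of its $\pm1$ entry flipped). Let $(a^i)_{i\in I}$, $I=\{1,\dots,N\}$, be a Hamiltonian cycle, indices taken modulo $N$. A quadruple built from two edges $\{a^n,a^{n+1}\}$, $\{a^m,a^{m+1}\}$ of the cycle is a \emph{site} if for some $c\in\mathcal{C}_d$ and some $i$ one of the following holds: (wopp) $a^{n+1}=a^n+c$,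 $a^m=a^{m+1}+c$, and $a^m-a^{n+1}=a^{m+1}-a^n\in\{\pm2e_i\}$; (nwopp) $a^{n+1}=a^n+c$, $a^{m+1}=a^m+c$, and $a^m-a^n=a^{m+1}-a^{n+1}\in\{\pm2e_i\}$; (wocp) $a^{n+1}=a^n+c$, $a^{m+1}=a^m+\tilde c$, and $a^m-a^n=\langle c,e_{[c,1]}\rangle e_{[c,1]}$; (nwocp) $a^{n+1}=a^n+c$, $a^m=a^{m+1}+\tilde c$, and $a^{m+1}-a^n=\langle c,e_{[c,1]}\rangle e_{[c,1]}$. The support of the site is $\{a^n,a^{n+1},a^m,a^{m+1}\}$. A Hamiltonian cycle is \emph{bi-sited} if it contains two sites whose supports are disjoint (the endpoints of the four edges are pairwise distinct). *)

theory Defs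
  imports Main
begin

text \<open>Points of Z^d are represented as integer lists of length d; a tuple
  (n_1,...,n_d) is a list of naturals.\<close>

definition board :: "nat list \<Rightarrow> int list set" where
  "board ns = {a. length a = length ns \<and>
      (\<forall>i<length ns. 1 \<le> a ! i \<and> a ! i \<le> int (ns ! i))}"

definition vadd :: "int list \<Rightarrow> int list \<Rightarrow> int list" where
  "vadd u v = map2 (+) u v"

definition vsub :: "int list \<Rightarrow> int list \<Rightarrow> int list" where
  "vsub u v = map2 (-) u v"

definition unitv :: "nat \<Rightarrow> nat \<Rightarrow> int list" where
  "unitv d i = map (\<lambda>l. if l = i then 1 else 0) [0..<d]"

definition knight_moves :: "nat \<Rightarrow> int list set" where
  "knight_moves d = {c. length c = d \<and>
      (\<exists>i<d. \<exists>j<d. i \<noteq> j \<and> \<bar>c ! i\<bar> = 1 \<and> \<bar>c ! j\<bar> = 2 \<and>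
         (\<forall>l<d. l \<noteq> i \<longrightarrow> l \<noteq> j \<longrightarrow> c ! l = 0))}"

definition knight_adj :: "nat list \<Rightarrow> int list \<Rightarrow> int list \<Rightarrow> bool" where
  "knight_adj ns a b \<longleftrightarrow> a \<in> board ns \<and> b \<in> board ns \<and>
      vsub a b \<in> knight_moves (length ns)"

definition ctilde :: "int list \<Rightarrow> int list" where
  "ctilde c = map (\<lambda>x. if \<bar>x\<bar> = 1 then - x else x) c"

definition cpart1 :: "int list \<Rightarrow> int list" where
  "cpart1 c = map (\<lambda>x. if \<bar>x\<bar> = 1 then x else 0) c"

definition ham_cycle :: "nat list \<Rightarrow> int list list \<Rightarrow> bool" where
  "ham_cycle ns cyc \<longleftrightarrow> length cyc \<ge> 3 \<and> distinct cyc \<and> set cyc = board ns \<and>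
     (\<forall>i<length cyc. knight_adj ns (cyc ! i) (cyc ! ((i + 1) mod length cyc)))"

definition cyc_at :: "int list list \<Rightarrow> nat \<Rightarrow> int list" where
  "cyc_at cyc i = cyc ! (i mod length cyc)"

definition is_site :: "nat list \<Rightarrow> int list list \<Rightarrow> nat \<Rightarrow> nat \<Rightarrow> bool" where
  "is_site ns cyc n m \<longleftrightarrow>
    (let d = length ns; an = cyc_at cyc n; an1 = cyc_at cyc (n + 1);
         am = cyc_at cyc m; am1 = cyc_at cyc (m + 1) in
     \<exists>c \<in> knight_moves d. \<exists>i<d.
       (an1 = vadd an c \<and> am = vadd am1 c \<and> vsub am an1 = vsub am1 an \<and>
          (vsub am an1 = map ((*) 2) (unitv d i) \<or> vsub am an1 = map ((*) (-2)) (unitv d i)))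
     \<or> (an1 = vadd an c \<and> am1 = vadd am c \<and> vsub am an = vsub am1 an1 \<and>
          (vsub am an = map ((*) 2) (unitv d i) \<or> vsub am an = map ((*) (-2)) (unitv d i)))
     \<or> (an1 = vadd an c \<and> am1 = vadd am (ctilde c) \<and> vsub am an = cpart1 c)
     \<or> (an1 = vadd an c \<and> am = vadd am1 (ctilde c) \<and> vsub am1 an = cpart1 c))"

definition site_support :: "int list list \<Rightarrow> nat \<Rightarrow> nat \<Rightarrow> int list set" where
  "site_support cyc n m = {cyc_at cyc n, cyc_at cyc (n + 1), cyc_at cyc m, cyc_at cyc (m + 1)}"

definition bisited :: "nat list \<Rightarrow> int list list \<Rightarrow> bool" where
  "bisited ns cyc \<longleftrightarrow> (\<exists>n1 m1 n2 m2. is_site ns cyc n1 m1 \<and> is_site ns cyc n2 m2 \<and>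
     distinct [cyc_at cyc n1, cyc_at cyc (n1 + 1), cyc_at cyc m1, cyc_at cyc (m1 + 1),
               cyc_at cyc n2, cyc_at cyc (n2 + 1), cyc_at cyc m2, cyc_at cyc (m2 + 1)])"

definition has_bisited_ham_cycle :: "nat list \<Rightarrow> bool" where
  "has_bisited_ham_cycle ns \<longleftrightarrow> (\<exists>cyc. ham_cycle ns cyc \<and> bisited ns cyc)"

end

theory Submission
  imports Defs
begin


lemma length_vadd[simp]: "length (vadd u v) = min (length u) (length v)"
  by (simp add: vadd_def)
lemma length_vsub[simp]: "length (vsub u v) = min (length u) (length v)"
  by (simp add: vsub_def)
lemma nth_vadd[simp]: "i < length u \<Longrightarrow> i < length v \<Longrightarrow> vadd u v ! i = u!i + v!i"
  by (simp add: vadd_def)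
lemma nth_vsub[simp]: "i < length u \<Longrightarrow> i < length v \<Longrightarrow> vsub u v ! i = u!i - v!i"
  by (simp add: vsub_def)
lemma length_unitv[simp]: "length (unitv d i) = d" by (simp add: unitv_def)
lemma nth_unitv[simp]: "l < d \<Longrightarrow> unitv d i ! l = (if l = i then 1 else 0)"
  by (simp add: unitv_def)
lemma length_ctilde[simp]: "length (ctilde c) = length c" by (simp add: ctilde_def)
lemma nth_ctilde[simp]: "l < length c \<Longrightarrow> ctilde c ! l = (if \<bar>c!l\<bar> = 1 then - (c!l) else c!l)"
  by (simp add: ctilde_def)
lemma length_cpart1[simp]: "length (cpart1 c) = length c" by (simp add: cpart1_def)
lemma nth_cpart1[simp]: "l < length c \<Longrightarrow> cpart1 c ! l = (if \<bar>c!l\<bar> = 1 then c!l else 0)"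
  by (simp add: cpart1_def)

lemma knight_len: "c \<in> knight_moves d \<Longrightarrow> length c = d" by (simp add: knight_moves_def)

definition site4 :: "nat \<Rightarrow> int list \<Rightarrow> int list \<Rightarrow> int list \<Rightarrow> int list \<Rightarrow> bool" where
 "site4 d an an1 am am1 \<longleftrightarrow>
     (\<exists>c \<in> knight_moves d. \<exists>i<d.
       (an1 = vadd an c \<and> am = vadd am1 c \<and> vsub am an1 = vsub am1 an \<and>
          (vsub am an1 = map ((*) 2) (unitv d i) \<or> vsub am an1 = map ((*) (-2)) (unitv d i)))
     \<or> (an1 = vadd an c \<and> am1 = vadd am c \<and> vsub am an = vsub am1 an1 \<and>
          (vsub am an = map ((*) 2) (unitv d i) \<or> vsub am an = map ((*) (-2)) (unitv d i)))
     \<or> (an1 = vadd an c \<and> am1 = vadd am (ctilde c) \<and> vsub am an = cpart1 c)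
     \<or> (an1 = vadd an c \<and> am = vadd am1 (ctilde c) \<and> vsub am1 an = cpart1 c))"

lemma is_site_site4: "is_site ns cyc n m \<longleftrightarrow> site4 (length ns) (cyc_at cyc n) (cyc_at cyc (n+1)) (cyc_at cyc m) (cyc_at cyc (m+1))"
  unfolding is_site_def site4_def Let_def by simp

lemma knight_neg: "c \<in> knight_moves d \<Longrightarrow> map uminus c \<in> knight_moves d"
  unfolding knight_moves_def by (auto 0 3)

lemma leq: "length xs = d \<Longrightarrow> length ys = d \<Longrightarrow> xs = ys \<longleftrightarrow> (\<forall>l<d. xs!l = ys!l)"
  by (metis list_eq_iff_nth_eq)

lemma site4_rev:
  assumes "site4 d p q r s" "length p = d" "length q = d" "length r = d" "length s = d"
  shows "site4 d q p s r"
proof -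
  from assms(1) obtain c i where c: "c \<in> knight_moves d" "i < d" and
    H: "(q = vadd p c \<and> r = vadd s c \<and> vsub r q = vsub s p \<and>
          (vsub r q = map ((*) 2) (unitv d i) \<or> vsub r q = map ((*) (-2)) (unitv d i)))
     \<or> (q = vadd p c \<and> s = vadd r c \<and> vsub r p = vsub s q \<and>
          (vsub r p = map ((*) 2) (unitv d i) \<or> vsub r p = map ((*) (-2)) (unitv d i)))
     \<or> (q = vadd p c \<and> s = vadd r (ctilde c) \<and> vsub r p = cpart1 c)
     \<or> (q = vadd p c \<and> r = vadd s (ctilde c) \<and> vsub s p = cpart1 c)"
    unfolding site4_def by blast
  have lc: "length c = d" using c knight_len by blast
  let ?c = "map uminus c"
  have "?c \<in> knight_moves d" using knight_neg c by blast
  moreover have "(p = vadd q ?c \<and> s = vadd r ?c \<and> vsub s p = vsub r q \<and>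
          (vsub s p = map ((*) 2) (unitv d i) \<or> vsub s p = map ((*) (-2)) (unitv d i)))
     \<or> (p = vadd q ?c \<and> r = vadd s ?c \<and> vsub s q = vsub r p \<and>
          (vsub s q = map ((*) 2) (unitv d i) \<or> vsub s q = map ((*) (-2)) (unitv d i)))
     \<or> (p = vadd q ?c \<and> r = vadd s (ctilde ?c) \<and> vsub s q = cpart1 ?c)
     \<or> (p = vadd q ?c \<and> s = vadd r (ctilde ?c) \<and> vsub r q = cpart1 ?c)"
    using H assms(2-5) lc
    apply (elim disjE conjE)
    by (simp_all add: leq)
  ultimately show ?thesis using c unfolding site4_def by blast
qed



lemma all_less_Suc: "(\<forall>l<Suc d. P l) \<longleftrightarrow> (\<forall>l<d. P l) \<and> P d"
  using less_Suc_eq by auto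

lemma knight_app0: "c \<in> knight_moves d \<Longrightarrow> c @ [0] \<in> knight_moves (Suc d)"
  unfolding knight_moves_def
  apply (clarsimp simp: nth_append)
  subgoal for i j by (rule exI[of _ i], simp, rule exI[of _ j], auto simp: nth_append)
  done

lemma unitv_Suc: "i < d \<Longrightarrow> unitv (Suc d) i = unitv d i @ [0]"
  by (simp add: unitv_def)

lemma site4_lift:
  assumes "site4 d p q r s" "length p = d" "length q = d" "length r = d" "length s = d"
  shows "site4 (Suc d) (p@[a]) (q@[a]) (r@[a]) (s@[a])"
proof -
  from assms(1) obtain c i where c: "c \<in> knight_moves d" "i < d" and
    H: "(q = vadd p c \<and> r = vadd s c \<and> vsub r q = vsub s p \<and>
          (vsub r q = map ((*) 2) (unitv d i) \<or> vsub r q = map ((*) (-2)) (unitv d i)))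
     \<or> (q = vadd p c \<and> s = vadd r c \<and> vsub r p = vsub s q \<and>
          (vsub r p = map ((*) 2) (unitv d i) \<or> vsub r p = map ((*) (-2)) (unitv d i)))
     \<or> (q = vadd p c \<and> s = vadd r (ctilde c) \<and> vsub r p = cpart1 c)
     \<or> (q = vadd p c \<and> r = vadd s (ctilde c) \<and> vsub s p = cpart1 c)"
    unfolding site4_def by blast
  have lc: "length c = d" using c knight_len by blast
  let ?c = "c @ [0]"
  have "?c \<in> knight_moves (Suc d)" using knight_app0 c by blast
  moreover have "i < Suc d" using c by simp
  moreover have "((q@[a]) = vadd (p@[a]) ?c \<and> (r@[a]) = vadd (s@[a]) ?c \<and> vsub (r@[a]) (q@[a]) = vsub (s@[a]) (p@[a]) \<and>
          (vsub (r@[a]) (q@[a]) = map ((*) 2) (unitv (Suc d) i) \<or> vsub (r@[a]) (q@[a]) = map ((*) (-2)) (unitv (Suc d) i)))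
     \<or> ((q@[a]) = vadd (p@[a]) ?c \<and> (s@[a]) = vadd (r@[a]) ?c \<and> vsub (r@[a]) (p@[a]) = vsub (s@[a]) (q@[a]) \<and>
          (vsub (r@[a]) (p@[a]) = map ((*) 2) (unitv (Suc d) i) \<or> vsub (r@[a]) (p@[a]) = map ((*) (-2)) (unitv (Suc d) i)))
     \<or> ((q@[a]) = vadd (p@[a]) ?c \<and> (s@[a]) = vadd (r@[a]) (ctilde ?c) \<and> vsub (r@[a]) (p@[a]) = cpart1 ?c)
     \<or> ((q@[a]) = vadd (p@[a]) ?c \<and> (r@[a]) = vadd (s@[a]) (ctilde ?c) \<and> vsub (s@[a]) (p@[a]) = cpart1 ?c)"
    using H assms(2-5) lc c(2)
    apply (elim disjE conjE)
    by (simp_all add: leq[where d="Suc d"] all_less_Suc nth_append leq[where d=d])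
  ultimately show ?thesis unfolding site4_def by blast
qed

definition twoe :: "nat \<Rightarrow> int list \<Rightarrow> bool" where
  "twoe d v \<longleftrightarrow> (\<exists>i<d. v = map ((*) 2) (unitv d i) \<or> v = map ((*) (-2)) (unitv d i))"

lemma twoe_iff: "twoe d v \<longleftrightarrow> length v = d \<and> (\<exists>j<d. \<exists>a. \<bar>a\<bar> = 2 \<and> (\<forall>l<d. v!l = (if l = j then a else 0)))"
proof
  assume "twoe d v"
  then obtain i where i: "i<d" "v = map ((*) 2) (unitv d i) \<or> v = map ((*) (-2)) (unitv d i)"
    unfolding twoe_def by blast
  then show "length v = d \<and> (\<exists>j<d. \<exists>a. \<bar>a\<bar> = 2 \<and> (\<forall>l<d. v!l = (if l = j then a else 0)))"
    by (elim disjE; intro conjI exI[of _ i]; simp; intro exI[of _ 2] exI[of _ "-2"]; simp)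
next
  assume "length v = d \<and> (\<exists>j<d. \<exists>a. \<bar>a\<bar> = 2 \<and> (\<forall>l<d. v!l = (if l = j then a else 0)))"
  then obtain j a where "length v = d" "j<d" "\<bar>a\<bar> = 2" "\<forall>l<d. v!l = (if l = j then a else 0)" by blast
  then show "twoe d v" unfolding twoe_def
    by (intro exI[of _ j]) (auto simp: leq[where d=d] abs_if split: if_splits)
qed

lemma knight_c2: "c \<in> knight_moves d \<Longrightarrow> \<exists>j<d. \<exists>a. \<bar>a\<bar> = 2 \<and> (\<forall>l<d. (if \<bar>c!l\<bar> = 1 then 0 else c!l) = (if l = j then a else 0))"
  unfolding knight_moves_def
  apply clarify
  subgoal for i j by (rule exI[of _ j], simp, rule exI[of _ "c!j"], auto)
  done

lemma site4_link:
  assumes "site4 d x y z w" "length x = d" "length y = d" "length z = d" "length w = d"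
  shows "(twoe d (vsub w x) \<and> twoe d (vsub z y)) \<or> (twoe d (vsub z x) \<and> twoe d (vsub w y))"
proof -
  from assms(1) obtain c i where c: "c \<in> knight_moves d" "i < d" and
    H: "(y = vadd x c \<and> z = vadd w c \<and> vsub z y = vsub w x \<and>
          (vsub z y = map ((*) 2) (unitv d i) \<or> vsub z y = map ((*) (-2)) (unitv d i)))
     \<or> (y = vadd x c \<and> w = vadd z c \<and> vsub z x = vsub w y \<and>
          (vsub z x = map ((*) 2) (unitv d i) \<or> vsub z x = map ((*) (-2)) (unitv d i)))
     \<or> (y = vadd x c \<and> w = vadd z (ctilde c) \<and> vsub z x = cpart1 c)
     \<or> (y = vadd x c \<and> z = vadd w (ctilde c) \<and> vsub w x = cpart1 c)"
    unfolding site4_def by blast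
  have lc: "length c = d" using c knight_len by blast
  obtain j a where ja: "j<d" "\<bar>a\<bar> = 2" "\<forall>l<d. (if \<bar>c!l\<bar> = 1 then 0 else c!l) = (if l = j then a else 0)"
    using knight_c2[OF c(1)] by blast
  have t1: "twoe d v" if "length v = d" "\<forall>l<d. v!l = (if \<bar>c!l\<bar> = 1 then 0 else c!l)" for v
    unfolding twoe_iff using that ja by auto
  have t2: "twoe d v" if "length v = d" "\<forall>l<d. v!l = - (if \<bar>c!l\<bar> = 1 then 0 else c!l)" for v
    unfolding twoe_iff using that ja by (intro conjI exI[of _ j] exI[of _ "-a"]) auto
  have C1: ?thesis if a: "y = vadd x c" "w = vadd z (ctilde c)" "vsub z x = cpart1 c"
  proof -
    have "twoe d (vsub w x)" apply (rule t1) using a assms lc by (auto simp: leq[where d=d])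
    moreover have "twoe d (vsub z y)" apply (rule t2) using a assms lc by (auto simp: leq[where d=d])
    ultimately show ?thesis by blast
  qed
  have C2: ?thesis if a: "y = vadd x c" "z = vadd w (ctilde c)" "vsub w x = cpart1 c"
  proof -
    have "twoe d (vsub z x)" apply (rule t1) using a assms lc by (auto simp: leq[where d=d])
    moreover have "twoe d (vsub w y)" apply (rule t2) using a assms lc by (auto simp: leq[where d=d])
    ultimately show ?thesis by blast
  qed
  have C0: "twoe d v" if "v = map ((*) 2) (unitv d i) \<or> v = map ((*) (-2)) (unitv d i)" for v
    using that c(2) unfolding twoe_def by blast
  have K1: ?thesis if a: "y = vadd x c \<and> z = vadd w c \<and> vsub z y = vsub w x \<and>
          (vsub z y = map ((*) 2) (unitv d i) \<or> vsub z y = map ((*) (-2)) (unitv d i))"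
  proof -
    have t: "twoe d (vsub z y)" using C0 a by blast
    have e: "vsub w x = vsub z y" using a by (simp only: eq_commute[of "vsub z y"])
    show ?thesis using t unfolding e by blast
  qed
  have K2: ?thesis if a: "y = vadd x c \<and> w = vadd z c \<and> vsub z x = vsub w y \<and>
          (vsub z x = map ((*) 2) (unitv d i) \<or> vsub z x = map ((*) (-2)) (unitv d i))"
  proof -
    have t: "twoe d (vsub z x)" using C0 a by blast
    have e: "vsub w y = vsub z x" using a[THEN conjunct2, THEN conjunct2, THEN conjunct1] by (rule sym)
    show ?thesis using t unfolding e by blast
  qed
  show ?thesis using H
    apply (elim disjE)
    subgoal by (rule K1)
    subgoal by (rule K2)
    subgoal using C1 by blast
    subgoal using C2 by blast
    done
qed

lemma link_knight:
  assumes "twoe d (vsub q p)" "length p = d" "length q = d" "\<bar>a - b\<bar> = 1"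
  shows "vsub (p@[a]) (q@[b]) \<in> knight_moves (Suc d)"
proof -
  obtain j e where je: "j<d" "\<bar>e\<bar> = 2" "\<forall>l<d. (vsub q p)!l = (if l = j then e else 0)"
    using assms(1) unfolding twoe_iff by blast
  define v where "v = vsub (p@[a]) (q@[b])"
  have lv: "length v = Suc d" unfolding v_def using assms(2,3) by simp
  have vl: "v!l = -(vsub q p ! l)" if "l < d" for l
    unfolding v_def using that assms(2,3) by (simp add: nth_append)
  have vd: "v!d = a - b" unfolding v_def using assms(2,3) by (simp add: nth_append)
  have "\<bar>v!d\<bar> = 1" using vd assms(4) by simp
  moreover have "\<bar>v!j\<bar> = 2" using vl[OF je(1)] je by simp
  moreover have "\<forall>l<Suc d. l \<noteq> d \<longrightarrow> l \<noteq> j \<longrightarrow> v!l = 0"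
  proof (intro allI impI)
    fix l assume "l < Suc d" "l \<noteq> d" "l \<noteq> j"
    then have "l < d" by simp
    then show "v!l = 0" using vl[of l] je(3) \<open>l \<noteq> j\<close> by simp
  qed
  moreover have "d \<noteq> j" "d < Suc d" "j < Suc d" using je(1) by auto
  ultimately have "v \<in> knight_moves (Suc d)" unfolding knight_moves_def using lv by blast
  then show ?thesis unfolding v_def .
qed

lemma knight_adj_sym: "knight_adj ns a b \<Longrightarrow> knight_adj ns b a"
proof -
  assume h: "knight_adj ns a b"
  have la: "length a = length ns" "length b = length ns" using h by (auto simp: knight_adj_def board_def)
  have "vsub b a = map uminus (vsub a b)" using la by (simp add: leq[where d="length ns"])
  then show ?thesis using h knight_neg unfolding knight_adj_def by metis
qed



fun pedges :: "'a list \<Rightarrow> ('a \<times> 'a) set" where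
  "pedges [] = {}" | "pedges [x] = {}" | "pedges (x#y#xs) = insert (x,y) (pedges (y#xs))"

lemma pedges_Cons: "xs \<noteq> [] \<Longrightarrow> pedges (x#xs) = insert (x, hd xs) (pedges xs)"
  by (cases xs) auto

lemma pedges_append: "xs \<noteq> [] \<Longrightarrow> ys \<noteq> [] \<Longrightarrow> pedges (xs@ys) = pedges xs \<union> pedges ys \<union> {(last xs, hd ys)}"
proof (induction xs rule: pedges.induct)
  case 1 then show ?case by simp
next
  case (2 x) then show ?case by (simp add: pedges_Cons)
next
  case (3 x y xs) then show ?case by auto
qed

lemma pedges_map: "pedges (map f xs) = (\<lambda>(u,v). (f u, f v)) ` pedges xs"
  by (induction xs rule: pedges.induct) auto

lemma pedges_rev: "pedges (rev xs) = (\<lambda>(u,v). (v,u)) ` pedges xs"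
proof (induction xs rule: pedges.induct)
  case (3 x y xs)
  have "rev (x#y#xs) = rev (y#xs) @ [x]" by (rule rev.simps(2))
  moreover have "pedges (rev (y#xs) @ [x]) = pedges (rev (y#xs)) \<union> {(y, x)}"
    by (subst pedges_append) (auto simp: last_rev)
  ultimately have "pedges (rev (x#y#xs)) = pedges (rev (y#xs)) \<union> {(y, x)}" by simp
  then show ?case using 3 by auto
qed auto

lemma pedges_nth: "(u,v) \<in> pedges xs \<longleftrightarrow> (\<exists>i. Suc i < length xs \<and> u = xs!i \<and> v = xs!Suc i)"
proof (induction xs rule: pedges.induct)
  case (3 x y xs)
  show ?case
  proof
    assume "(u,v) \<in> pedges (x#y#xs)"
    then consider "(u,v) = (x,y)" | "(u,v) \<in> pedges (y#xs)" by auto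
    then show "\<exists>i. Suc i < length (x#y#xs) \<and> u = (x#y#xs)!i \<and> v = (x#y#xs)!Suc i"
    proof cases
      case 1 then show ?thesis by (intro exI[of _ 0]) auto
    next
      case 2 then obtain i where "Suc i < length (y#xs) \<and> u = (y#xs)!i \<and> v = (y#xs)!Suc i"
        using 3 by blast
      then show ?thesis by (intro exI[of _ "Suc i"]) auto
    qed
  next
    assume "\<exists>i. Suc i < length (x#y#xs) \<and> u = (x#y#xs)!i \<and> v = (x#y#xs)!Suc i"
    then obtain i where i: "Suc i < length (x#y#xs)" "u = (x#y#xs)!i" "v = (x#y#xs)!Suc i" by blast
    show "(u,v) \<in> pedges (x#y#xs)"
    proof (cases i)
      case 0 then show ?thesis using i by simp
    next
      case (Suc j) then have "(u,v) \<in> pedges (y#xs)" using 3 i by auto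
      then show ?thesis by simp
    qed
  qed
qed auto

lemma cedges_nth: "L \<noteq> [] \<Longrightarrow> (u,v) \<in> pedges (L@[hd L]) \<longleftrightarrow> (\<exists>i<length L. u = L!i \<and> v = L!(Suc i mod length L))"
  unfolding pedges_nth
proof (intro iffI; elim exE conjE)
  fix i assume "L \<noteq> []" "Suc i < length (L @ [hd L])" "u = (L @ [hd L]) ! i" "v = (L @ [hd L]) ! Suc i"
  then show "\<exists>i<length L. u = L ! i \<and> v = L ! (Suc i mod length L)"
    apply (intro exI[of _ i])
    apply (cases "Suc i < length L")
     apply (auto simp: nth_append hd_conv_nth)
    apply (subgoal_tac "Suc i = length L")
    by auto
next
  fix i assume "L \<noteq> []" "i < length L" "u = L!i" "v = L ! (Suc i mod length L)"
  then show "\<exists>i. Suc i < length (L @ [hd L]) \<and> u = (L @ [hd L]) ! i \<and> v = (L @ [hd L]) ! Suc i"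
    apply (intro exI[of _ i])
    apply (cases "Suc i = length L")
     apply (simp add: nth_append hd_conv_nth)
    by (auto simp: nth_append hd_conv_nth)
qed

lemma cedges_rotate1: "L \<noteq> [] \<Longrightarrow> pedges (rotate1 L @ [hd (rotate1 L)]) = pedges (L @ [hd L])"
proof (cases L)
  case (Cons a xs)
  show ?thesis
  proof (cases xs)
    case Nil then show ?thesis using Cons by simp
  next
    case (Cons b ys)
    have "pedges (rotate1 L @ [hd (rotate1 L)]) = pedges ((b#ys@[a]) @ [b])" using Cons \<open>L = a#xs\<close> by simp
    also have "\<dots> = pedges (b#ys@[a]) \<union> {(a,b)}" by (subst pedges_append) auto
    also have "pedges (b#ys@[a]) = pedges (b#ys) \<union> {(last (b#ys), a)}" using pedges_append[of "b#ys" "[a]"] by simp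
    finally have 1: "pedges (rotate1 L @ [hd (rotate1 L)]) = pedges (b#ys) \<union> {(last (b#ys), a)} \<union> {(a,b)}" .
    have "pedges (L @ [hd L]) = pedges (a # (b#ys) @ [a])" using Cons \<open>L = a#xs\<close> by simp
    also have "\<dots> = insert (a,b) (pedges ((b#ys) @ [a]))" by simp
    also have "pedges ((b#ys) @ [a]) = pedges (b#ys) \<union> {(last (b#ys), a)}" using pedges_append[of "b#ys" "[a]"] by simp
    finally show ?thesis using 1 by auto
  qed
qed simp

lemma cedges_rotate: "L \<noteq> [] \<Longrightarrow> pedges (rotate n L @ [hd (rotate n L)]) = pedges (L @ [hd L])"
proof (induction n)
  case (Suc n)
  have "rotate (Suc n) L = rotate1 (rotate n L)" by simp
  moreover have "rotate n L \<noteq> []" using Suc by simp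
  ultimately show ?case using Suc cedges_rotate1 by metis
qed simp

lemma cyc_adj_iff: "L \<noteq> [] \<Longrightarrow> (\<forall>i<length L. G (L!i) (L!((i+1) mod length L))) \<longleftrightarrow> (\<forall>(u,v)\<in>pedges (L@[hd L]). G u v)"
proof -
  assume L: "L \<noteq> []"
  show ?thesis
  proof
    assume "\<forall>i<length L. G (L!i) (L!((i+1) mod length L))"
    then show "\<forall>(u,v)\<in>pedges (L@[hd L]). G u v" using cedges_nth[OF L] by auto
  next
    assume a: "\<forall>(u,v)\<in>pedges (L@[hd L]). G u v"
    show "\<forall>i<length L. G (L!i) (L!((i+1) mod length L))"
    proof (intro allI impI)
      fix i assume "i < length L"
      then have "(L!i, L!(Suc i mod length L)) \<in> pedges (L@[hd L])" using cedges_nth[OF L] by blast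
      then show "G (L!i) (L!((i+1) mod length L))" using a by auto
    qed
  qed
qed

lemma cedge_cyc_at: "(u,v) \<in> pedges (L@[hd L]) \<Longrightarrow> L \<noteq> [] \<Longrightarrow> \<exists>i. cyc_at L i = u \<and> cyc_at L (i+1) = v"
proof -
  assume a: "(u,v) \<in> pedges (L@[hd L])" "L \<noteq> []"
  then obtain i where "i<length L" "u = L!i" "v = L!(Suc i mod length L)" using cedges_nth[of L u v] by auto
  then show ?thesis unfolding cyc_at_def by (intro exI[of _ i]) simp
qed

lemma cyc_at_cedge: "L \<noteq> [] \<Longrightarrow> (cyc_at L n, cyc_at L (n+1)) \<in> pedges (L@[hd L])"
  unfolding cedges_nth cyc_at_def by (intro exI[of _ "n mod length L"]) (auto simp: mod_Suc_eq)

lemma cedge_succ: "distinct L \<Longrightarrow> (u,v) \<in> pedges (L@[hd L]) \<Longrightarrow> i < length L \<Longrightarrow> L!i = u \<Longrightarrow> v = L!(Suc i mod length L)"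
  using cedges_nth[of L u v] nth_eq_iff_index_eq by fastforce

lemma pedges_set: "pedges xs \<subseteq> set xs \<times> set xs"
  by (induction xs rule: pedges.induct) auto



definition lift :: "nat \<Rightarrow> int list \<Rightarrow> int list" where "lift t p = p @ [int t]"

lemma lift_inj[simp]: "lift t p = lift s q \<longleftrightarrow> t = s \<and> p = q"
  unfolding lift_def by auto

lemma board_len: "p \<in> board ns \<Longrightarrow> length p = length ns" by (simp add: board_def)

lemma lift_board: "p \<in> board ns \<Longrightarrow> 1 \<le> t \<Longrightarrow> t \<le> K \<Longrightarrow> lift t p \<in> board (ns@[K])"
  unfolding board_def lift_def by (auto simp: nth_append less_Suc_eq)

lemma board_snoc: "q \<in> board (ns@[K]) \<longleftrightarrow> (\<exists>t p. q = lift t p \<and> p \<in> board ns \<and> 1 \<le> t \<and> t \<le> K)"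
proof
  assume q: "q \<in> board (ns@[K])"
  then have lq: "length q = Suc (length ns)" by (simp add: board_def)
  then have qq: "q = butlast q @ [last q]" by (metis append_butlast_last_id list.size(3) nat.simps(3))
  have qne: "q \<noteq> []" using lq by auto
  have lastq: "last q = q ! length ns" using lq qne by (simp add: last_conv_nth)
  have b: "1 \<le> last q \<and> last q \<le> int K" using q lastq unfolding board_def by (auto simp: nth_append)
  have bq: "\<forall>i<Suc (length ns). 1 \<le> q!i \<and> q!i \<le> int ((ns@[K])!i)" using q by (simp add: board_def)
  have "butlast q \<in> board ns" unfolding board_def
  proof (intro CollectI conjI allI impI)
    show "length (butlast q) = length ns" using lq by simp
  next
    fix i assume i: "i < length ns"
    then have "1 \<le> q!i \<and> q!i \<le> int ((ns@[K])!i)" using bq by simp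
    then show "1 \<le> butlast q ! i" "butlast q ! i \<le> int (ns ! i)" using i lq by (auto simp: nth_butlast nth_append)
  qed
  moreover have "q = lift (nat (last q)) (butlast q)" unfolding lift_def using qq b by simp
  ultimately show "\<exists>t p. q = lift t p \<and> p \<in> board ns \<and> 1 \<le> t \<and> t \<le> K"
    using b by (intro exI[of _ "nat (last q)"] exI[of _ "butlast q"]) auto
next
  assume "\<exists>t p. q = lift t p \<and> p \<in> board ns \<and> 1 \<le> t \<and> t \<le> K"
  then show "q \<in> board (ns@[K])" using lift_board by blast
qed

lemma vsub_snoc: "length p = length q \<Longrightarrow> vsub (p@[a]) (q@[b]) = vsub p q @ [a-b]"
  by (simp add: vsub_def)

lemma knight_adj_lift: "knight_adj ns p q \<Longrightarrow> 1 \<le> t \<Longrightarrow> t \<le> K \<Longrightarrow> knight_adj (ns@[K]) (lift t p) (lift t q)"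
  unfolding knight_adj_def
  using lift_board[of p ns t K] lift_board[of q ns t K] board_len[of p ns] board_len[of q ns]
    knight_app0[of "vsub p q" "length ns"]
  by (simp add: lift_def vsub_snoc)

definition lk :: "nat list \<Rightarrow> int list \<Rightarrow> int list \<Rightarrow> bool" where
  "lk ns p q \<longleftrightarrow> p \<in> board ns \<and> q \<in> board ns \<and> twoe (length ns) (vsub q p)"

lemma lk_adj: "lk ns p q \<Longrightarrow> 1 \<le> t \<Longrightarrow> Suc t \<le> K \<Longrightarrow>
   knight_adj (ns@[K]) (lift t p) (lift (Suc t) q) \<and> knight_adj (ns@[K]) (lift (Suc t) q) (lift t p)"
proof -
  assume a: "lk ns p q" "1 \<le> t" "Suc t \<le> K"
  have "knight_adj (ns@[K]) (lift t p) (lift (Suc t) q)"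
    unfolding knight_adj_def
    using a lift_board[of p ns t K] lift_board[of q ns "Suc t" K] board_len[of p ns] board_len[of q ns]
      link_knight[of "length ns" q p "int t" "int (Suc t)"]
    unfolding lk_def by (simp add: lift_def)
  then show ?thesis using knight_adj_sym by blast
qed

fun Mc :: "bool \<Rightarrow> int list list \<Rightarrow> int list list \<Rightarrow> nat \<Rightarrow> nat \<Rightarrow> int list list" where
  "Mc cr A B t 0 = map (lift t) (B @ A)"
| "Mc cr A B t (Suc r) = map (lift t) B @ (if cr then Mc cr A B (Suc t) r else rev (Mc cr A B (Suc t) r)) @ map (lift t) A"

lemma pedges_app_sub: "pedges xs \<subseteq> pedges (xs @ ys) \<and> pedges ys \<subseteq> pedges (xs @ ys)"
  by (cases "xs = []"; cases "ys = []") (auto simp: pedges_append)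

lemma adj_rev: "\<forall>(u,v)\<in>pedges L. knight_adj ns u v \<Longrightarrow> \<forall>(u,v)\<in>pedges (rev L). knight_adj ns u v"
  unfolding pedges_rev by (auto intro: knight_adj_sym)

lemma ball_lift: "\<forall>(u,v)\<in>S. knight_adj ns u v \<Longrightarrow> 1 \<le> t \<Longrightarrow> t \<le> K \<Longrightarrow>
   \<forall>(u,v)\<in>(\<lambda>(u,v). (lift t u, lift t v)) ` S. knight_adj (ns@[K]) u v"
proof (intro ballI)
  fix e assume a: "\<forall>(u,v)\<in>S. knight_adj ns u v" "1 \<le> t" "t \<le> K" and e: "e \<in> (\<lambda>(u,v). (lift t u, lift t v)) ` S"
  then obtain u v where uv: "(u,v) \<in> S" "e = (lift t u, lift t v)" by auto
  then have "knight_adj ns u v" using a(1) by auto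
  then have "knight_adj (ns@[K]) (lift t u) (lift t v)" using knight_adj_lift a(2,3) by blast
  then show "case e of (u,v) \<Rightarrow> knight_adj (ns@[K]) u v" using uv by simp
qed

lemma pedges_app3: "X \<noteq> [] \<Longrightarrow> Y \<noteq> [] \<Longrightarrow> Z \<noteq> [] \<Longrightarrow>
  pedges (X @ Y @ Z) = pedges X \<union> pedges Y \<union> pedges Z \<union> {(last X, hd Y), (last Y, hd Z)}"
  by (simp add: pedges_append) auto

definition Fl :: "nat \<Rightarrow> int list \<times> int list \<Rightarrow> int list \<times> int list" where
  "Fl s = (\<lambda>(p,q). (lift s p, lift s q))"
definition Gl :: "nat \<Rightarrow> int list \<times> int list \<Rightarrow> int list \<times> int list" where
  "Gl s = (\<lambda>(p,q). (lift s q, lift s p))"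

lemma FG_swap: "Gl s ` E = (\<lambda>(u,v). (v,u)) ` (Fl s ` E)" "Fl s ` E = (\<lambda>(u,v). (v,u)) ` (Gl s ` E)"
  unfolding image_image by (rule image_cong[OF refl], simp add: Fl_def Gl_def split: prod.splits)+

context
  fixes ns :: "nat list" and A B :: "int list list" and x y z w :: "int list" and cr :: bool
  assumes Ane: "A \<noteq> []" and Bne: "B \<noteq> []" and hdA: "hd A = y" and lastA: "last A = z"
    and hdB: "hd B = w" and lastB: "last B = x"
    and distAB: "distinct (A@B)" and setAB: "set (A@B) = board ns"
    and adjAB: "\<forall>(u,v) \<in> pedges A \<union> pedges B \<union> {(z,w),(x,y)}. knight_adj ns u v"
    and links: "if cr then lk ns x w \<and> lk ns y z else lk ns x z \<and> lk ns y w"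
begin

lemma M_hd_last: "Mc cr A B t r \<noteq> [] \<and> hd (Mc cr A B t r) = lift t w \<and> last (Mc cr A B t r) = lift t z"
  using Ane Bne hdA lastA hdB lastB by (cases r) (auto simp: hd_map last_map)

lemma M_set: "set (Mc cr A B t r) = {lift s p | s p. t \<le> s \<and> s \<le> t + r \<and> p \<in> board ns}"
proof (induction r arbitrary: t)
  case 0
  have "set (B@A) = board ns" using setAB by auto
  then have "set (Mc cr A B t 0) = lift t ` board ns" by (simp only: Mc.simps set_map)
  then show ?case by auto
next
  case (Suc r)
  have "set (Mc cr A B t (Suc r)) = lift t ` set (A@B) \<union> set (Mc cr A B (Suc t) r)" by auto
  also have "\<dots> = lift t ` board ns \<union> {lift s p | s p. Suc t \<le> s \<and> s \<le> Suc t + r \<and> p \<in> board ns}"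
    unfolding Suc setAB ..
  also have "\<dots> = {lift s p | s p. t \<le> s \<and> s \<le> t + Suc r \<and> p \<in> board ns}"
  proof (rule set_eqI, rule iffI)
    fix u assume "u \<in> lift t ` board ns \<union> {lift s p | s p. Suc t \<le> s \<and> s \<le> Suc t + r \<and> p \<in> board ns}"
    then show "u \<in> {lift s p | s p. t \<le> s \<and> s \<le> t + Suc r \<and> p \<in> board ns}" by auto
  next
    fix u assume "u \<in> {lift s p | s p. t \<le> s \<and> s \<le> t + Suc r \<and> p \<in> board ns}"
    then obtain s p where "u = lift s p" "t \<le> s" "s \<le> t + Suc r" "p \<in> board ns" by blast
    then show "u \<in> lift t ` board ns \<union> {lift s p | s p. Suc t \<le> s \<and> s \<le> Suc t + r \<and> p \<in> board ns}"
      by (cases "s = t") auto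
  qed
  finally show ?case .
qed

lemma M_distinct: "distinct (Mc cr A B t r)"
proof (induction r arbitrary: t)
  case 0 then show ?case using distAB by (auto simp: distinct_map inj_on_def)
next
  case (Suc r)
  have d1: "distinct (map (lift t) (B @ A))" using distAB by (auto simp: distinct_map inj_on_def)
  have "set (Mc cr A B (Suc t) r) \<inter> lift t ` set (A@B) = {}" unfolding M_set by auto
  then show ?case using Suc[of "Suc t"] d1 by auto
qed

lemma adj_lifted: "1 \<le> t \<Longrightarrow> t \<le> K \<Longrightarrow> (u,v) \<in> pedges A \<union> pedges B \<union> {(z,w),(x,y)} \<Longrightarrow>
   knight_adj (ns@[K]) (lift t u) (lift t v)"
  using adjAB knight_adj_lift by blast

lemma M_adj: "1 \<le> t \<Longrightarrow> t + r \<le> K \<Longrightarrow> \<forall>(u,v)\<in>pedges (Mc cr A B t r). knight_adj (ns@[K]) u v"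
proof (induction r arbitrary: t)
  case 0
  have "pedges (Mc cr A B t 0) = (\<lambda>(u,v). (lift t u, lift t v)) ` (pedges B \<union> pedges A \<union> {(x,y)})"
    using Ane Bne hdA lastB by (simp add: pedges_map pedges_append last_map hd_map image_Un)
  moreover have "\<forall>(u,v)\<in>pedges B \<union> pedges A \<union> {(x,y)}. knight_adj ns u v" using adjAB by blast
  ultimately show ?case using ball_lift[of "pedges B \<union> pedges A \<union> {(x,y)}" ns t K] 0 by simp
next
  case (Suc r)
  let ?M = "Mc cr A B (Suc t) r"
  let ?Y = "if cr then ?M else rev ?M"
  have Mn: "?M \<noteq> []" using M_hd_last by blast
  have IH: "\<forall>(u,v)\<in>pedges ?M. knight_adj (ns@[K]) u v" using Suc.IH[of "Suc t"] Suc.prems by simp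
  have IHY: "\<forall>(u,v)\<in>pedges ?Y. knight_adj (ns@[K]) u v"
    using IH adj_rev[OF IH] by simp
  have E1: "pedges (Mc cr A B t (Suc r)) = pedges (map (lift t) B) \<union> pedges ?Y \<union> pedges (map (lift t) A)
      \<union> {(last (map (lift t) B), hd ?Y), (last ?Y, hd (map (lift t) A))}"
  proof -
    have eq: "Mc cr A B t (Suc r) = map (lift t) B @ ?Y @ map (lift t) A" by (simp only: Mc.simps)
    have sy: "set ?Y = set ?M" by simp
    have "?Y \<noteq> []"
    proof
      assume "?Y = []"
      then have "set ?M = {}" using sy by simp
      then show False using Mn by simp
    qed
    then show ?thesis unfolding eq using Ane Bne by (intro pedges_app3) auto
  qed
  have P1: "\<forall>(u,v)\<in>pedges (map (lift t) B) \<union> pedges (map (lift t) A). knight_adj (ns@[K]) u v"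
  proof -
    have "\<forall>(u,v)\<in>pedges B \<union> pedges A. knight_adj ns u v" using adjAB by blast
    then have "\<forall>(u,v)\<in>(\<lambda>(u,v). (lift t u, lift t v)) ` (pedges B \<union> pedges A). knight_adj (ns@[K]) u v"
      using ball_lift[of "pedges B \<union> pedges A" ns t K] Suc.prems by simp
    then show ?thesis by (simp add: pedges_map image_Un)
  qed
  have P3: "knight_adj (ns@[K]) (last (map (lift t) B)) (hd ?Y) \<and> knight_adj (ns@[K]) (last ?Y) (hd (map (lift t) A))"
  proof -
    have h: "hd ?M = lift (Suc t) w" "last ?M = lift (Suc t) z" using M_hd_last by auto
    have tK: "Suc t \<le> K" using Suc.prems by simp
    have t1: "1 \<le> t" using Suc.prems by simp
    have lb: "last (map (lift t) B) = lift t x" and ha: "hd (map (lift t) A) = lift t y"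
      using Ane Bne lastB hdA by (auto simp: last_map hd_map)
    show ?thesis
    proof (cases cr)
      case True
      then have "lk ns x w" "lk ns y z" using links by auto
      then have "knight_adj (ns@[K]) (lift t x) (lift (Suc t) w)" "knight_adj (ns@[K]) (lift (Suc t) z) (lift t y)"
        using lk_adj[OF _ t1 tK, of ns x w] lk_adj[OF _ t1 tK, of ns y z] by auto
      then show ?thesis using True h unfolding lb ha by simp
    next
      case False
      then have "lk ns x z" "lk ns y w" using links by auto
      then have "knight_adj (ns@[K]) (lift t x) (lift (Suc t) z)" "knight_adj (ns@[K]) (lift (Suc t) w) (lift t y)"
        using lk_adj[OF _ t1 tK, of ns x z] lk_adj[OF _ t1 tK, of ns y w] by auto
      then show ?thesis using False h Mn unfolding lb ha by (simp add: hd_rev last_rev)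
    qed
  qed
  show ?case unfolding E1 ball_Un using P1 P3 IHY by simp
qed

lemma M_top: "Fl (t+r) ` (pedges A \<union> pedges B) \<subseteq> pedges (Mc cr A B t r) \<or>
              Gl (t+r) ` (pedges A \<union> pedges B) \<subseteq> pedges (Mc cr A B t r)"
proof (induction r arbitrary: t)
  case 0
  have "pedges (Mc cr A B t 0) = (\<lambda>(u,v). (lift t u, lift t v)) ` (pedges B \<union> pedges A \<union> {(x,y)})"
    using Ane Bne hdA lastB by (simp add: pedges_map pedges_append last_map hd_map image_Un)
  moreover have "Fl t ` (pedges A \<union> pedges B) \<subseteq> (\<lambda>(u,v). (lift t u, lift t v)) ` (pedges B \<union> pedges A \<union> {(x,y)})"
    unfolding Fl_def by (rule image_mono) blast
  ultimately have "Fl t ` (pedges A \<union> pedges B) \<subseteq> pedges (Mc cr A B t 0)" by simp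
  then show ?case by simp
next
  case (Suc r)
  let ?M = "Mc cr A B (Suc t) r"
  let ?Y = "if cr then ?M else rev ?M"
  let ?E = "pedges A \<union> pedges B"
  have sub: "pedges ?Y \<subseteq> pedges (Mc cr A B t (Suc r))"
  proof -
    have eq: "Mc cr A B t (Suc r) = map (lift t) B @ (?Y @ map (lift t) A)" by (simp only: Mc.simps)
    have "pedges ?Y \<subseteq> pedges (?Y @ map (lift t) A)" using pedges_app_sub by blast
    also have "\<dots> \<subseteq> pedges (map (lift t) B @ (?Y @ map (lift t) A))" using pedges_app_sub by blast
    finally show ?thesis unfolding eq .
  qed
  have e: "t + Suc r = Suc t + r" by simp
  have IH: "Fl (Suc t + r) ` ?E \<subseteq> pedges ?M \<or> Gl (Suc t + r) ` ?E \<subseteq> pedges ?M" by (rule Suc.IH)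
  show ?case unfolding e
  proof (cases cr)
    case True
    have YM: "?Y = ?M" using True by simp
    have s1: "pedges ?M \<subseteq> pedges (Mc cr A B t (Suc r))" using sub unfolding YM .
    from IH show "Fl (Suc t + r) ` ?E \<subseteq> pedges (Mc cr A B t (Suc r)) \<or> Gl (Suc t + r) ` ?E \<subseteq> pedges (Mc cr A B t (Suc r))"
    proof
      assume "Fl (Suc t + r) ` ?E \<subseteq> pedges ?M"
      then have "Fl (Suc t + r) ` ?E \<subseteq> pedges (Mc cr A B t (Suc r))" using s1 by (rule subset_trans)
      then show ?thesis by (rule disjI1)
    next
      assume "Gl (Suc t + r) ` ?E \<subseteq> pedges ?M"
      then have "Gl (Suc t + r) ` ?E \<subseteq> pedges (Mc cr A B t (Suc r))" using s1 by (rule subset_trans)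
      then show ?thesis by (rule disjI2)
    qed
  next
    case False
    have YM: "?Y = rev ?M" using False by simp
    have s2: "(\<lambda>(u,v). (v,u)) ` pedges ?M \<subseteq> pedges (Mc cr A B t (Suc r))" using sub unfolding YM pedges_rev .
    from IH show "Fl (Suc t + r) ` ?E \<subseteq> pedges (Mc cr A B t (Suc r)) \<or> Gl (Suc t + r) ` ?E \<subseteq> pedges (Mc cr A B t (Suc r))"
    proof
      assume "Fl (Suc t + r) ` ?E \<subseteq> pedges ?M"
      then have "Gl (Suc t + r) ` ?E \<subseteq> (\<lambda>(u,v). (v,u)) ` pedges ?M" unfolding FG_swap(1) by (rule image_mono)
      then have "Gl (Suc t + r) ` ?E \<subseteq> pedges (Mc cr A B t (Suc r))" using s2 by (rule subset_trans)
      then show ?thesis by (rule disjI2)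
    next
      assume "Gl (Suc t + r) ` ?E \<subseteq> pedges ?M"
      then have "Fl (Suc t + r) ` ?E \<subseteq> (\<lambda>(u,v). (v,u)) ` pedges ?M" unfolding FG_swap(2) by (rule image_mono)
      then have "Fl (Suc t + r) ` ?E \<subseteq> pedges (Mc cr A B t (Suc r))" using s2 by (rule subset_trans)
      then show ?thesis by (rule disjI1)
    qed
  qed
qed

end



lemma cyc_at_mem: "L \<noteq> [] \<Longrightarrow> cyc_at L i \<in> set L"
  unfolding cyc_at_def by simp

lemma decompose:
  assumes dC: "distinct C" and Cne: "C \<noteq> []"
    and xy: "(x,y) \<in> pedges (C@[hd C])" and zw: "(z,w) \<in> pedges (C@[hd C])"
    and dist: "distinct [x,y,z,w]"
  shows "\<exists>A B. A \<noteq> [] \<and> B \<noteq> [] \<and> hd A = y \<and> last A = z \<and> hd B = w \<and> last B = x \<and>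
     set (A@B) = set C \<and> distinct (A@B) \<and> length (A@B) = length C \<and>
     pedges (C@[hd C]) = pedges A \<union> pedges B \<union> {(z,w),(x,y)}"
proof -
  have ys: "y \<in> set C" using xy pedges_set[of "C@[hd C]"] Cne by auto
  then obtain i0 where i0: "i0 < length C" "C!i0 = y" by (metis in_set_conv_nth)
  define R where "R = rotate i0 C"
  have Rne: "R \<noteq> []" and dR: "distinct R" and sR: "set R = set C" and lR: "length R = length C"
    using Cne dC unfolding R_def by auto
  have ER: "pedges (R@[hd R]) = pedges (C@[hd C])" unfolding R_def using cedges_rotate Cne by blast
  have hR: "R!0 = y" unfolding R_def using i0 Cne by (simp add: nth_rotate)
  have xs: "x \<in> set R" using xy pedges_set[of "C@[hd C]"] Cne sR by auto
  then obtain ix where ix: "ix < length R" "R!ix = x" by (metis in_set_conv_nth)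
  have "y = R!(Suc ix mod length R)" using cedge_succ[OF dR _ ix] xy ER by simp
  then have "R!(Suc ix mod length R) = R!0" using hR by simp
  then have "Suc ix mod length R = 0" using dR Rne nth_eq_iff_index_eq
    by (metis length_greater_0_conv mod_less_divisor)
  then have "Suc ix = length R" using ix(1)
    by (metis Suc_leI le_neq_implies_less mod_less nat.distinct(1))
  then have "ix = length R - 1" by simp
  then have lastR: "last R = x" using ix Rne by (simp add: last_conv_nth)
  have zs: "z \<in> set R" using zw pedges_set[of "C@[hd C]"] Cne sR by auto
  then obtain j where j: "j < length R" "R!j = z" by (metis in_set_conv_nth)
  have wj: "w = R!(Suc j mod length R)" using cedge_succ[OF dR _ j] zw ER by simp
  have sj: "Suc j < length R"
  proof (rule ccontr)
    assume "\<not> Suc j < length R"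
    then have "Suc j = length R" using j by simp
    then have "w = y" using wj hR by simp
    then show False using dist by simp
  qed
  then have w': "w = R!(Suc j)" using wj by simp
  define A where "A = take (Suc j) R"
  define B where "B = drop (Suc j) R"
  have AB: "A@B = R" unfolding A_def B_def by simp
  have An: "A \<noteq> []" and Bn: "B \<noteq> []" unfolding A_def B_def using sj Rne by auto
  have "hd A = y" unfolding A_def using hR Rne by (simp add: hd_conv_nth)
  moreover have "last A = z" unfolding A_def using j sj by (simp add: take_Suc_conv_app_nth)
  moreover have hB: "hd B = w" unfolding B_def using sj w' by (simp add: hd_drop_conv_nth)
  moreover have "last B = x" unfolding B_def using sj lastR by simp
  moreover have "pedges (C@[hd C]) = pedges A \<union> pedges B \<union> {(z,w),(x,y)}"
  proof -
    have hR': "hd R = y" using hR Rne by (simp add: hd_conv_nth)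
    have "pedges (R@[hd R]) = pedges ((A@B)@[y])" unfolding AB hR' ..
    also have "\<dots> = pedges (A@B) \<union> pedges [y] \<union> {(last (A@B), hd [y])}" using An by (intro pedges_append) auto
    also have "\<dots> = pedges (A@B) \<union> {(x, y)}" using AB lastR by simp
    also have "pedges (A@B) = pedges A \<union> pedges B \<union> {(last A, hd B)}" using An Bn by (rule pedges_append)
    finally have "pedges (R@[hd R]) = pedges A \<union> pedges B \<union> {(z, w)} \<union> {(x, y)}"
      unfolding \<open>last A = z\<close> hB .
    then show ?thesis unfolding ER by blast
  qed
  moreover have "set (A@B) = set C" "distinct (A@B)" "length (A@B) = length C" using AB sR dR lR by auto
  ultimately show ?thesis using An Bn by (intro exI[of _ A] exI[of _ B]) simp
qed

lemma board_layers: "1 \<le> k \<Longrightarrow> board (ns@[k]) = lift 1 ` board ns \<union> {lift s p | s p. 2 \<le> s \<and> s \<le> k \<and> p \<in> board ns}"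
  unfolding set_eq_iff board_snoc
  apply (intro allI iffI)
   apply (elim exE conjE)
  subgoal for q t p by (cases "t = 1") auto
  by auto

theorem proposition3p7:
  fixes ns :: "nat list" and k :: nat
  assumes "\<forall>x \<in> set ns. x > 0"
    and "has_bisited_ham_cycle ns"
    and "k \<ge> 2"
  shows "has_bisited_ham_cycle (ns @ [k])"
proof -
  obtain C where hC: "ham_cycle ns C" and bC: "bisited ns C"
    using assms(2) unfolding has_bisited_ham_cycle_def by blast
  obtain n1 m1 n2 m2 where s1: "is_site ns C n1 m1" and s2: "is_site ns C n2 m2" and
    dd: "distinct [cyc_at C n1, cyc_at C (n1 + 1), cyc_at C m1, cyc_at C (m1 + 1),
               cyc_at C n2, cyc_at C (n2 + 1), cyc_at C m2, cyc_at C (m2 + 1)]"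
    using bC unfolding bisited_def by blast
  define d where "d = length ns"
  define x where "x = cyc_at C n1"
  define y where "y = cyc_at C (n1+1)"
  define z where "z = cyc_at C m1"
  define w where "w = cyc_at C (m1+1)"
  define p where "p = cyc_at C n2"
  define q where "q = cyc_at C (n2+1)"
  define r where "r = cyc_at C m2"
  define s where "s = cyc_at C (m2+1)"
  have Cne: "C \<noteq> []" and dC: "distinct C" and sC: "set C = board ns" and lC: "length C \<ge> 3"
    using hC unfolding ham_cycle_def by auto
  have adjC: "\<forall>(u,v)\<in>pedges (C@[hd C]). knight_adj ns u v"
    using hC cyc_adj_iff[OF Cne, of "knight_adj ns"] unfolding ham_cycle_def by auto
  have inB: "x \<in> board ns" "y \<in> board ns" "z \<in> board ns" "w \<in> board ns"
     "p \<in> board ns" "q \<in> board ns" "r \<in> board ns" "s \<in> board ns"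
    unfolding x_def y_def z_def w_def p_def q_def r_def s_def using cyc_at_mem[OF Cne] sC by auto
  have lens: "length x = d" "length y = d" "length z = d" "length w = d"
     "length p = d" "length q = d" "length r = d" "length s = d"
    using inB board_len unfolding d_def by auto
  have S1: "site4 d x y z w" using s1 unfolding is_site_site4 x_def y_def z_def w_def d_def .
  have S2: "site4 d p q r s" using s2 unfolding is_site_site4 p_def q_def r_def s_def d_def .
  have D8: "distinct [x,y,z,w,p,q,r,s]" using dd unfolding x_def y_def z_def w_def p_def q_def r_def s_def .
  have exy: "(x,y) \<in> pedges (C@[hd C])" "(z,w) \<in> pedges (C@[hd C])"
      "(p,q) \<in> pedges (C@[hd C])" "(r,s) \<in> pedges (C@[hd C])"
    unfolding x_def y_def z_def w_def p_def q_def r_def s_def using cyc_at_cedge[OF Cne] by auto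
  obtain A B where A1: "A \<noteq> []" "B \<noteq> []" "hd A = y" "last A = z" "hd B = w" "last B = x"
    and A2: "set (A@B) = set C" "distinct (A@B)" "length (A@B) = length C"
    and A3: "pedges (C@[hd C]) = pedges A \<union> pedges B \<union> {(z,w),(x,y)}"
    using decompose[OF dC Cne exy(1,2)] D8 by auto
  define cr where "cr = (twoe d (vsub w x) \<and> twoe d (vsub z y))"
  have links: "if cr then lk ns x w \<and> lk ns y z else lk ns x z \<and> lk ns y w"
    using site4_link[OF S1 lens(1-4)] inB unfolding cr_def lk_def d_def[symmetric] by auto
  have adjAB: "\<forall>(u,v) \<in> pedges A \<union> pedges B \<union> {(z,w),(x,y)}. knight_adj ns u v"
    using adjC A3 by simp
  have setAB: "set (A@B) = board ns" using A2 sC by simp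
  note ctx = A1 A2(2) setAB adjAB links
  define M where "M = Mc cr A B 2 (k-2)"
  define X where "X = (if cr then M else rev M)"
  define H where "H = map (lift 1) (A@B) @ X"
  have Mhl: "M \<noteq> [] \<and> hd M = lift 2 w \<and> last M = lift 2 z"
    unfolding M_def using M_hd_last[OF ctx] by blast
  have XM: "X = M \<or> X = rev M" unfolding X_def by simp
  have Xn: "X \<noteq> []" using Mhl XM by auto
  have Hne: "H \<noteq> []" and hdH: "hd H = lift 1 y" unfolding H_def using A1 by (auto simp: hd_map)
  have kk: "2 + (k - 2) = k" using assms(3) by simp
  have sM: "set M = {lift s p | s p. 2 \<le> s \<and> s \<le> k \<and> p \<in> board ns}"
    unfolding M_def M_set[OF ctx] kk ..
  have sX: "set X = set M" using XM by auto
  have bl: "board (ns@[k]) = lift 1 ` board ns \<union> {lift s p | s p. 2 \<le> s \<and> s \<le> k \<and> p \<in> board ns}"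
    using board_layers[of k ns] assms(3) by simp
  have s1: "set (map (lift 1) (A@B)) = lift 1 ` board ns" using setAB by (metis list.set_map)
  have setH: "set H = board (ns@[k])"
    unfolding H_def bl set_append s1 sX sM ..
  have distH: "distinct H"
  proof -
    have "distinct M" unfolding M_def by (rule M_distinct[OF ctx])
    then have "distinct X" using XM by auto
    moreover have "distinct (map (lift 1) (A@B))" using A2(2) by (auto simp: distinct_map inj_on_def)
    moreover have "set X \<inter> set (map (lift 1) (A@B)) = {}" using sX sM by auto
    ultimately show ?thesis unfolding H_def by auto
  qed
  have lenH: "length H \<ge> 3" unfolding H_def using A2(3) lC by simp
  have EH: "pedges (H@[hd H]) = pedges (map (lift 1) (A@B)) \<union> pedges X \<union>
        {(lift 1 x, hd X), (last X, lift 1 y)}"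
  proof -
    have "pedges (H@[hd H]) = pedges (map (lift 1) (A@B) @ X @ [lift 1 y])"
      unfolding H_def hdH[unfolded H_def] by simp
    also have "\<dots> = pedges (map (lift 1) (A@B)) \<union> pedges X \<union> pedges [lift 1 y] \<union>
        {(last (map (lift 1) (A@B)), hd X), (last X, hd [lift 1 y])}"
      using A1 Xn by (intro pedges_app3) auto
    finally show ?thesis using A1 by (simp add: last_map)
  qed
  have PXH: "pedges X \<subseteq> pedges (H@[hd H])" unfolding EH by blast
  have EAB: "pedges (map (lift 1) (A@B)) = (\<lambda>(u,v). (lift 1 u, lift 1 v)) ` (pedges A \<union> pedges B \<union> {(z,w)})"
    using A1 by (simp add: pedges_map pedges_append last_map hd_map image_Un)
  have adjH: "\<forall>(u,v)\<in>pedges (H@[hd H]). knight_adj (ns@[k]) u v"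
  proof -
    have a1: "\<forall>(u,v)\<in>pedges (map (lift 1) (A@B)). knight_adj (ns@[k]) u v"
      unfolding EAB using adj_lifted[OF ctx, of 1 k] assms(3) by auto
    have aM: "\<forall>(u,v)\<in>pedges M. knight_adj (ns@[k]) u v"
      unfolding M_def using M_adj[OF ctx, of 2 "k-2" k] assms(3) by simp
    have aX: "\<forall>(u,v)\<in>pedges X. knight_adj (ns@[k]) u v"
      unfolding X_def using aM adj_rev[OF aM] by simp
    have two: "Suc 1 = (2::nat)" by simp
    have k2: "Suc 1 \<le> k" using assms(3) by simp
    have "knight_adj (ns@[k]) (lift 1 x) (hd X) \<and> knight_adj (ns@[k]) (last X) (lift 1 y)"
    proof (cases cr)
      case True
      then have "lk ns x w" "lk ns y z" using links by auto
      then have "knight_adj (ns@[k]) (lift 1 x) (lift 2 w)" "knight_adj (ns@[k]) (lift 2 z) (lift 1 y)"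
        using lk_adj[OF _ _ k2, of ns x w] lk_adj[OF _ _ k2, of ns y z] unfolding two by auto
      then show ?thesis using True Mhl unfolding X_def by simp
    next
      case False
      then have "lk ns x z" "lk ns y w" using links by auto
      then have "knight_adj (ns@[k]) (lift 1 x) (lift 2 z)" "knight_adj (ns@[k]) (lift 2 w) (lift 1 y)"
        using lk_adj[OF _ _ k2, of ns x z] lk_adj[OF _ _ k2, of ns y w] unfolding two by auto
      then show ?thesis using False Mhl unfolding X_def by (simp add: hd_rev last_rev)
    qed
    then show ?thesis unfolding EH using a1 aX by auto
  qed
  have adjH': "\<forall>i<length H. knight_adj (ns@[k]) (H!i) (H!((i+1) mod length H))"
    using cyc_adj_iff[OF Hne, of "knight_adj (ns@[k])"] adjH by blast
  have ham: "ham_cycle (ns@[k]) H"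
    unfolding ham_cycle_def using lenH distH setH adjH' by blast
  have pqAB: "(p,q) \<in> pedges A \<union> pedges B" "(r,s) \<in> pedges A \<union> pedges B"
    using exy(3,4) A3 D8 by auto
  have l1: "(lift 1 p, lift 1 q) \<in> pedges (H@[hd H])" "(lift 1 r, lift 1 s) \<in> pedges (H@[hd H])"
    unfolding EH EAB using pqAB by auto
  have S2l: "site4 (Suc d) (lift t p) (lift t q) (lift t r) (lift t s)" for t
    unfolding lift_def using site4_lift[OF S2 lens(5-8)] .
  have top: "\<exists>a b c e. distinct [a,b,c,e] \<and> {a,b,c,e} = {p,q,r,s} \<and>
      site4 (Suc d) (lift k a) (lift k b) (lift k c) (lift k e) \<and>
      (lift k a, lift k b) \<in> pedges (H@[hd H]) \<and> (lift k c, lift k e) \<in> pedges (H@[hd H])"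
  proof -
    have T0: "Fl k ` (pedges A \<union> pedges B) \<subseteq> pedges M \<or> Gl k ` (pedges A \<union> pedges B) \<subseteq> pedges M"
      unfolding M_def using M_top[OF ctx, of 2 "k-2"] unfolding kk .
    have mF: "(lift k u, lift k v) \<in> pedges M" if "Fl k ` (pedges A \<union> pedges B) \<subseteq> pedges M" "(u,v) \<in> pedges A \<union> pedges B" for u v
    proof -
      have "Fl k (u,v) \<in> pedges M" using that by blast
      then show ?thesis by (simp add: Fl_def)
    qed
    have mG: "(lift k v, lift k u) \<in> pedges M" if "Gl k ` (pedges A \<union> pedges B) \<subseteq> pedges M" "(u,v) \<in> pedges A \<union> pedges B" for u v
    proof -
      have "Gl k (u,v) \<in> pedges M" using that by blast
      then show ?thesis by (simp add: Gl_def)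
    qed
    have sw: "(v,u) \<in> pedges (rev M)" if "(u,v) \<in> pedges M" for u v
      unfolding pedges_rev by (rule image_eqI[where x="(u,v)"]) (auto simp: that)
    have fw: "(lift k p, lift k q) \<in> pedges X \<and> (lift k r, lift k s) \<in> pedges X \<or>
              (lift k q, lift k p) \<in> pedges X \<and> (lift k s, lift k r) \<in> pedges X"
    proof (cases cr)
      case True
      from T0 show ?thesis
      proof
        assume h: "Fl k ` (pedges A \<union> pedges B) \<subseteq> pedges M"
        show ?thesis using mF[OF h pqAB(1)] mF[OF h pqAB(2)] True unfolding X_def by simp
      next
        assume h: "Gl k ` (pedges A \<union> pedges B) \<subseteq> pedges M"
        show ?thesis using mG[OF h pqAB(1)] mG[OF h pqAB(2)] True unfolding X_def by simp
      qed
    next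
      case False
      from T0 show ?thesis
      proof
        assume h: "Fl k ` (pedges A \<union> pedges B) \<subseteq> pedges M"
        show ?thesis using sw[OF mF[OF h pqAB(1)]] sw[OF mF[OF h pqAB(2)]] False unfolding X_def by simp
      next
        assume h: "Gl k ` (pedges A \<union> pedges B) \<subseteq> pedges M"
        show ?thesis using sw[OF mG[OF h pqAB(1)]] sw[OF mG[OF h pqAB(2)]] False unfolding X_def by simp
      qed
    qed
    have S2r: "site4 (Suc d) (lift k q) (lift k p) (lift k s) (lift k r)"
      using site4_rev[OF S2l] lens unfolding lift_def by simp
    show ?thesis
    proof (cases "(lift k p, lift k q) \<in> pedges X \<and> (lift k r, lift k s) \<in> pedges X")
      case True then show ?thesis using S2l[of k] D8 PXH
        by (intro exI[of _ p] exI[of _ q] exI[of _ r] exI[of _ s]) auto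
    next
      case False then have "(lift k q, lift k p) \<in> pedges X \<and> (lift k s, lift k r) \<in> pedges X" using fw by blast
      then show ?thesis using S2r D8 PXH
        by (intro exI[of _ q] exI[of _ p] exI[of _ s] exI[of _ r]) auto
    qed
  qed
  then obtain a b c e where T: "distinct [a,b,c,e]" "{a,b,c,e} = {p,q,r,s}"
      "site4 (Suc d) (lift k a) (lift k b) (lift k c) (lift k e)"
      "(lift k a, lift k b) \<in> pedges (H@[hd H])" "(lift k c, lift k e) \<in> pedges (H@[hd H])" by blast
  obtain i1 where i1: "cyc_at H i1 = lift 1 p" "cyc_at H (i1+1) = lift 1 q" using cedge_cyc_at[OF l1(1) Hne] by blast
  obtain j1 where j1: "cyc_at H j1 = lift 1 r" "cyc_at H (j1+1) = lift 1 s" using cedge_cyc_at[OF l1(2) Hne] by blast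
  obtain i2 where i2: "cyc_at H i2 = lift k a" "cyc_at H (i2+1) = lift k b" using cedge_cyc_at[OF T(4) Hne] by blast
  obtain j2 where j2: "cyc_at H j2 = lift k c" "cyc_at H (j2+1) = lift k e" using cedge_cyc_at[OF T(5) Hne] by blast
  have ld: "length (ns@[k]) = Suc d" unfolding d_def by simp
  have "is_site (ns@[k]) H i1 j1" unfolding is_site_site4 ld i1 j1 using S2l .
  moreover have "is_site (ns@[k]) H i2 j2" unfolding is_site_site4 ld i2 j2 using T(3) .
  moreover have "distinct [cyc_at H i1, cyc_at H (i1 + 1), cyc_at H j1, cyc_at H (j1 + 1),
               cyc_at H i2, cyc_at H (i2 + 1), cyc_at H j2, cyc_at H (j2 + 1)]"
    unfolding i1 i2 j1 j2 using T(1) D8 assms(3) by simp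
  ultimately have "bisited (ns@[k]) H" unfolding bisited_def by blast
  then show ?thesis unfolding has_bisited_ham_cycle_def using ham by blast
qed


end
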